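(* Let $\beta>0$, $k\in\mathbb N$ with $\beta\in(2k,2k+2]$, $f\in\mathcal H(\beta,\mathcal P)$ with $\mathcal P=\{\gamma,l^+,L,\varepsilon,C,\alpha,\xi,M\}$, and $p\in(0,1)$. Then for all $x\in\mathbb R$: (1) for every positive integer $i$ and every $\sigma<1-p^{1/i}$, $K_\sigma^if(x)\le M\big(\frac{2}{\sqrt3}\big)^i\psi(px)$; (2) for every $\sigma<1-p^{1/k}$ (read as $\sigma<1$ when $k=0$), $\max\big(f_k(x),g_k(x),\tfrac12h_k(x)\big)\le 2M\big(\frac4{\sqrt3}\big)^k\psi(px)$.
   Context: $\psi(x)=\pi^{-1/2}e^{-x^2}$, $\psi_\sigma(x)=\sigma^{-1}\psi(x/\sigma)$, $K_\sigma g=g*\psi_\sigma$, $K_\sigma^i$ its $i$-fold iterate, $\Delta_\sigma g=K_\sigma g-g$. Given $f$ and $\sigma$: $f_0=f$, $f_{j+1}=f-\Delta_\sigma f_j$; $J_{\sigma,k}=\{x:f_k(x)>\frac12f(x)\}$; $g_k=f_k\mathbf 1_{J_{\sigma,k}}+\frac12f\mathbf 1_{J_{\sigma,k}^c}$; $h_k=g_k/\int g_k$. For $\beta>0$, $r$ is the largest integer strictly less than $\beta$; $\mathcal H(\beta,\mathcal P)$ ($L$ polynomial, others positive constants) is the set of probability densities $f$ with $\ln f$ $r$ times differentiable, $|(\ln f)^{(r)}(x)-(\ln f)^{(r)}(y)|\le r!L(x)|y-x|^{\beta-r}$ for $|x-y|\le\gamma$, $|(\ln f)^{(j)}(0)|\le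 l^+$; $\int|(\ln f)^{(j)}|^{(2\beta+\varepsilon)/j}f\le C$, $\int|L|^{2+\varepsilon/\beta}f\le C$; $f(x)\le M\psi(x)$; $f>0$ nondecreasing on $(-\infty,-\alpha)$, nonincreasing on $(\alpha,\infty)$, $f\ge\xi$ on $[-\alpha,\alpha]$. *)

theory Defs
  imports "HOL-Analysis.Analysis" "HOL-Computational_Algebra.Polynomial"
begin

definition psi :: "real \<Rightarrow> real" where
  "psi x = exp (- (x^2)) / sqrt pi"

definition psi_s :: "real \<Rightarrow> real \<Rightarrow> real" where
  "psi_s \<sigma> x = psi (x / \<sigma>) / \<sigma>"

definition Ksig :: "real \<Rightarrow> (real \<Rightarrow> real) \<Rightarrow> real \<Rightarrow> real" where
  "Ksig \<sigma> g x = (\<integral>y. g (x - y) * psi_s \<sigma> y \<partial>lborel)"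

definition Delta :: "real \<Rightarrow> (real \<Rightarrow> real) \<Rightarrow> real \<Rightarrow> real" where
  "Delta \<sigma> g x = Ksig \<sigma> g x - g x"

primrec fseq :: "(real \<Rightarrow> real) \<Rightarrow> real \<Rightarrow> nat \<Rightarrow> real \<Rightarrow> real" where
  "fseq f \<sigma> 0 = f"
| "fseq f \<sigma> (Suc j) = (\<lambda>x. f x - Delta \<sigma> (fseq f \<sigma> j) x)"

definition Jset :: "(real \<Rightarrow> real) \<Rightarrow> real \<Rightarrow> nat \<Rightarrow> real set" where
  "Jset f \<sigma> k = {x. fseq f \<sigma> k x > f x / 2}"

definition gseq :: "(real \<Rightarrow> real) \<Rightarrow> real \<Rightarrow> nat \<Rightarrow> real \<Rightarrow> real" where
  "gseq f \<sigma> k x = (if x \<in> Jset f \<sigma> k then fseq f \<sigma> k x else f x / 2)"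

definition hseq :: "(real \<Rightarrow> real) \<Rightarrow> real \<Rightarrow> nat \<Rightarrow> real \<Rightarrow> real" where
  "hseq f \<sigma> k x = gseq f \<sigma> k x / (\<integral>y. gseq f \<sigma> k y \<partial>lborel)"

text \<open>r = largest integer strictly less than beta.\<close>
definition rdeg :: "real \<Rightarrow> nat" where
  "rdeg \<beta> = nat (\<lceil>\<beta>\<rceil> - 1)"

definition Hclass ::
  "real \<Rightarrow> real \<Rightarrow> real \<Rightarrow> real poly \<Rightarrow> real \<Rightarrow> real \<Rightarrow> real \<Rightarrow> real \<Rightarrow> real
   \<Rightarrow> (real \<Rightarrow> real) set" where
  "Hclass \<beta> \<gamma> lp L \<epsilon> C \<alpha> \<xi> M = {f.
     let r = rdeg \<beta>; lf = (\<lambda>x. ln (f x)); D = (\<lambda>j. (deriv ^^ j) lf) in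
     \<comment> \<open>probability density, positive\<close>
     f \<in> borel_measurable lborel \<and> (\<forall>x. 0 < f x) \<and>
     (\<integral>\<^sup>+x. ennreal (f x) \<partial>lborel) = 1 \<and>
     \<comment> \<open>ln f is r times differentiable\<close>
     (\<forall>j<r. \<forall>x. D j differentiable (at x)) \<and>
     \<comment> \<open>local Hoelder condition on the r-th derivative\<close>
     (\<forall>x y. \<bar>x - y\<bar> \<le> \<gamma> \<longrightarrow>
        \<bar>D r x - D r y\<bar> \<le> fact r * poly L x * \<bar>y - x\<bar> powr (\<beta> - real r)) \<and>
     (\<forall>j\<in>{1..r}. \<bar>D j 0\<bar> \<le> lp) \<and>
     (\<forall>j\<in>{1..r}. (\<integral>\<^sup>+x. ennreal (\<bar>D j x\<bar> powr ((2 * \<beta> + \<epsilon>) / real j) * f x) \<partial>lborel)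
                    \<le> ennreal C) \<and>
     (\<integral>\<^sup>+x. ennreal (\<bar>poly L x\<bar> powr (2 + \<epsilon> / \<beta>) * f x) \<partial>lborel) \<le> ennreal C \<and>
     (\<forall>x. f x \<le> M * psi x) \<and>
     (\<forall>x y. x \<le> y \<and> y < - \<alpha> \<longrightarrow> f x \<le> f y) \<and>
     (\<forall>x y. \<alpha> < x \<and> x \<le> y \<longrightarrow> f y \<le> f x) \<and>
     (\<forall>x. - \<alpha> \<le> x \<and> x \<le> \<alpha> \<longrightarrow> \<xi> \<le> f x)}"

end

theory Submission
  imports Defs "HOL-Probability.Probability"
begin

lemma psi_s_nd: assumes "0 < s" shows "psi_s s x = normal_density 0 (s / sqrt 2) x"
  using assms by (simp add: psi_s_def psi_def normal_density_def power_divide real_sqrt_mult field_simps)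

lemma gauss_conv:
  assumes t: "0 < t" and s: "0 < \<sigma>"
  shows "integrable lborel (\<lambda>y. psi ((x - y) / t) * psi_s \<sigma> y) \<and>
         (\<integral>y. psi ((x - y) / t) * psi_s \<sigma> y \<partial>lborel) = t * psi_s (sqrt (t^2 + \<sigma>^2)) x"
proof -
  have e: "psi ((x - y) / t) * psi_s \<sigma> y = t * (normal_density 0 (t / sqrt 2) (x - y) * normal_density 0 (\<sigma> / sqrt 2) y)" for y
  proof -
    have "psi ((x - y) / t) = t * normal_density 0 (t / sqrt 2) (x - y)"
    proof -
      have "psi ((x - y) / t) = t * psi_s t (x - y)" using t by (simp add: psi_s_def)
      then show ?thesis using psi_s_nd[OF t, of "x - y"] by simp
    qed
    then show ?thesis using s psi_s_nd[of \<sigma> y] by simp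
  qed
  have c: "(\<integral>\<^sup>+y. ennreal (normal_density 0 (t / sqrt 2) (x - y) * normal_density 0 (\<sigma> / sqrt 2) y) \<partial>lborel)
      = ennreal (normal_density 0 (sqrt ((t / sqrt 2)^2 + (\<sigma> / sqrt 2)^2)) x)"
  proof -
    have p1: "0 < t / sqrt 2" and p2: "0 < \<sigma> / sqrt 2" using t s by auto
    show ?thesis using fun_cong[OF conv_normal_density_zero_mean[OF p1 p2], of x] by simp
  qed
  have sq: "sqrt ((t / sqrt 2)^2 + (\<sigma> / sqrt 2)^2) = sqrt (t^2 + \<sigma>^2) / sqrt 2"
  proof -
    have "(t / sqrt 2)^2 + (\<sigma> / sqrt 2)^2 = (t^2 + \<sigma>^2) / 2" by (simp add: power_divide add_divide_distrib)
    then show ?thesis by (simp only: real_sqrt_divide)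
  qed
  have "integrable lborel (\<lambda>y. normal_density 0 (t / sqrt 2) (x - y) * normal_density 0 (\<sigma> / sqrt 2) y) \<and>
     (\<integral>y. normal_density 0 (t / sqrt 2) (x - y) * normal_density 0 (\<sigma> / sqrt 2) y \<partial>lborel) = normal_density 0 (sqrt ((t / sqrt 2)^2 + (\<sigma> / sqrt 2)^2)) x"
    apply (subst nn_integral_eq_integrable[symmetric])
    using c by (auto intro!: mult_nonneg_nonneg normal_density_nonneg)
  then have I: "integrable lborel (\<lambda>y. normal_density 0 (t / sqrt 2) (x - y) * normal_density 0 (\<sigma> / sqrt 2) y)"
    and V: "(\<integral>y. normal_density 0 (t / sqrt 2) (x - y) * normal_density 0 (\<sigma> / sqrt 2) y \<partial>lborel) = psi_s (sqrt (t^2 + \<sigma>^2)) x"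
    using sq psi_s_nd[of "sqrt (t^2 + \<sigma>^2)" x] t by (auto simp: add_pos_nonneg)
  have E: "(\<lambda>y. psi ((x - y) / t) * psi_s \<sigma> y) = (\<lambda>y. t * (normal_density 0 (t / sqrt 2) (x - y) * normal_density 0 (\<sigma> / sqrt 2) y))"
    using e by (rule ext)
  show ?thesis unfolding E using I V by simp
qed

lemma psi_meas[measurable]: "psi \<in> borel_measurable borel"
  unfolding psi_def by (intro borel_measurable_continuous_onI continuous_intros) auto

lemma psi_s_meas[measurable]: "psi_s s \<in> borel_measurable borel"
  unfolding psi_s_def by measurable

lemma psi_pos: "0 < psi x" by (simp add: psi_def)

lemma K_meas:
  assumes [measurable]: "g \<in> borel_measurable borel"
  shows "Ksig \<sigma> g \<in> borel_measurable borel"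
  unfolding Ksig_def
  by (rule lborel.borel_measurable_lebesgue_integral[where N=borel]) measurable

lemma K_bound:
  assumes g[measurable]: "g \<in> borel_measurable borel" and b: "\<And>x. \<bar>g x\<bar> \<le> c * psi (x / t)"
    and t: "0 < t" and s: "0 < \<sigma>"
  shows "\<bar>Ksig \<sigma> g x\<bar> \<le> c * psi (x / sqrt (t^2 + \<sigma>^2))"
proof -
  have c: "0 \<le> c" using b[of 0] psi_pos[of "0/t"] by (meson abs_ge_zero order_trans zero_le_mult_iff not_le)
  note G = gauss_conv[OF t s, of x]
  have I: "integrable lborel (\<lambda>y. c * (psi ((x - y) / t) * psi_s \<sigma> y))"
    using G by simp
  have ps: "0 \<le> psi_s \<sigma> y" for y using psi_pos[of "y/\<sigma>"] s by (simp add: psi_s_def)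
  have bd: "\<bar>g (x - y) * psi_s \<sigma> y\<bar> \<le> c * (psi ((x - y) / t) * psi_s \<sigma> y)" for y
    using mult_right_mono[OF b[of "x - y"] ps[of y]] ps[of y] by (simp add: abs_mult)
  have I2: "integrable lborel (\<lambda>y. g (x - y) * psi_s \<sigma> y)"
    by (rule Bochner_Integration.integrable_bound[OF I]) (auto intro!: AE_I2 order_trans[OF bd abs_ge_self])
  have "\<bar>Ksig \<sigma> g x\<bar> \<le> (\<integral>y. \<bar>g (x - y) * psi_s \<sigma> y\<bar> \<partial>lborel)"
    unfolding Ksig_def by (rule integral_abs_bound)
  also have "\<dots> \<le> (\<integral>y. c * (psi ((x - y) / t) * psi_s \<sigma> y) \<partial>lborel)"
    by (rule integral_mono[OF _ I]) (use I2 bd in auto)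
  also have "\<dots> = c * (t * psi_s (sqrt (t^2 + \<sigma>^2)) x)" using G by simp
  also have "\<dots> = c * ((t / sqrt (t^2 + \<sigma>^2)) * psi (x / sqrt (t^2 + \<sigma>^2)))"
    by (simp add: psi_s_def)
  also have "\<dots> \<le> c * psi (x / sqrt (t^2 + \<sigma>^2))"
  proof -
    have "t / sqrt (t^2 + \<sigma>^2) \<le> 1" using t s
    proof -
      have "t \<le> sqrt (t^2 + \<sigma>^2)" using t by (simp add: real_le_rsqrt)
      moreover have "0 < sqrt (t^2 + \<sigma>^2)" using t by (simp add: add_pos_nonneg)
      ultimately show ?thesis by simp
    qed
    then have "(t / sqrt (t^2 + \<sigma>^2)) * psi (x / sqrt (t^2 + \<sigma>^2)) \<le> psi (x / sqrt (t^2 + \<sigma>^2))"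
      using psi_pos[of "x / sqrt (t^2 + \<sigma>^2)"] using t by (intro mult_left_le_one_le) (auto intro!: divide_nonneg_nonneg)
    then show ?thesis using c by (rule mult_left_mono)
  qed
  finally show ?thesis .
qed


lemma psi_mono:
  assumes "0 < a" "a \<le> b" shows "psi (x / a) \<le> psi (x / b)"
proof -
  have "(x / b)^2 \<le> (x / a)^2"
    using assms by (simp add: power_divide frac_le)
  then show ?thesis unfolding psi_def by (simp add: divide_right_mono)
qed

lemma psi_mono2:
  assumes "0 < t" "0 \<le> p" "p * t \<le> 1" shows "psi (x / t) \<le> psi (p * x)"
proof -
  have "p^2 * t^2 \<le> 1" using assms
    by (metis power_mult_distrib mult_nonneg_nonneg less_imp_le power_le_one)
  then have "p^2 \<le> 1 / t^2" using assms by (simp add: field_simps)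
  then have "p^2 * x^2 \<le> x^2 / t^2"
    using mult_right_mono[of "p^2" "1/t^2" "x^2"] by simp
  then have "(p * x)^2 \<le> (x / t)^2" by (simp add: power_mult_distrib power_divide)
  then show ?thesis unfolding psi_def by (simp add: divide_right_mono)
qed

lemma t_le:
  fixes p \<sigma> :: real and i :: nat
  assumes p: "0 < p" "p < 1" and s: "0 < \<sigma>" and c: "i = 0 \<or> \<sigma> < 1 - p powr (1 / real i)"
  shows "p * sqrt (1 + real i * \<sigma>^2) \<le> 1"
proof (cases "i = 0")
  case True then show ?thesis using p by simp
next
  case False
  then have c: "\<sigma> < 1 - p powr (1 / real i)" using c by simp
  have pp: "0 < p powr (1 / real i)" using p by simp
  have s1: "\<sigma> < 1" using c pp by linarith
  have "p = (p powr (1 / real i)) ^ i"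
    using p False by (simp add: powr_realpow[symmetric] powr_powr)
  also have "\<dots> \<le> (1 - \<sigma>) ^ i" using c pp by (intro power_mono) auto
  finally have p1: "p \<le> (1 - \<sigma>) ^ i" .
  have b: "1 + real i * \<sigma> \<le> (1 + \<sigma>) ^ i" using Bernoulli_inequality[of \<sigma> i] s by simp
  have "sqrt (1 + real i * \<sigma>^2) \<le> 1 + real i * \<sigma>"
  proof (rule real_le_lsqrt)
    have "real i * \<sigma>^2 \<le> 2 * real i * \<sigma> + (real i * \<sigma>)^2"
    proof -
      have "\<sigma>^2 \<le> \<sigma>" using s s1 by (simp add: power2_eq_square)
      then have "real i * \<sigma>^2 \<le> real i * \<sigma>" by (simp add: mult_left_mono)
      moreover have "0 \<le> real i * \<sigma>" using s by simp
      moreover have "0 \<le> (real i * \<sigma>)^2" by simp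
      ultimately show ?thesis by linarith
    qed
    then show "1 + real i * \<sigma>^2 \<le> (1 + real i * \<sigma>)^2" by (simp add: power2_eq_square algebra_simps)
  qed (use s in auto)
  then have "p * sqrt (1 + real i * \<sigma>^2) \<le> (1 - \<sigma>) ^ i * (1 + \<sigma>) ^ i"
    using p1 b p s1 by (intro mult_mono) auto
  also have "\<dots> = (1 - \<sigma>^2) ^ i" by (simp add: power_mult_distrib[symmetric] power2_eq_square algebra_simps)
  also have "\<dots> \<le> 1" using s s1 by (intro power_le_one) (auto simp: power2_eq_square mult_le_one)
  finally show ?thesis .
qed

lemma sq_step: "0 \<le> \<sigma>^2 \<Longrightarrow> sqrt ((sqrt (1 + real i * \<sigma>^2))^2 + \<sigma>^2) = sqrt (1 + real (Suc i) * \<sigma>^2)"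
  by (simp add: algebra_simps)

lemma iterK:
  assumes s: "0 < \<sigma>" and [measurable]: "f \<in> borel_measurable borel" and b: "\<And>x. \<bar>f x\<bar> \<le> M * psi x"
  shows "(Ksig \<sigma> ^^ i) f \<in> borel_measurable borel \<and> (\<forall>x. \<bar>(Ksig \<sigma> ^^ i) f x\<bar> \<le> M * psi (x / sqrt (1 + real i * \<sigma>^2)))"
proof (induction i)
  case 0 then show ?case using b by simp
next
  case (Suc i)
  have t: "0 < sqrt (1 + real i * \<sigma>^2)" by (simp add: add_pos_nonneg)
  show ?case using Suc K_meas[of "(Ksig \<sigma> ^^ i) f" \<sigma>] K_bound[of "(Ksig \<sigma> ^^ i) f" M "sqrt (1 + real i * \<sigma>^2)" \<sigma>, OF _ _ t s]
    sq_step[of \<sigma> i] by (simp add: algebra_simps)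
qed

lemma iterF:
  assumes s: "0 < \<sigma>" and [measurable]: "f \<in> borel_measurable borel" and b: "\<And>x. \<bar>f x\<bar> \<le> M * psi x"
    and M: "0 \<le> M"
  shows "fseq f \<sigma> j \<in> borel_measurable borel \<and> (\<forall>x. \<bar>fseq f \<sigma> j x\<bar> \<le> M * (2^(j+1) - 1) * psi (x / sqrt (1 + real j * \<sigma>^2)))"
proof (induction j)
  case 0 then show ?case using b by simp
next
  case (Suc j)
  define t where "t = sqrt (1 + real j * \<sigma>^2)"
  define t' where "t' = sqrt (1 + real (Suc j) * \<sigma>^2)"
  define c :: real where "c = M * (2^(j+1) - 1)"
  have t: "0 < t" unfolding t_def by (simp add: add_pos_nonneg)
  have tt: "t \<le> t'" unfolding t_def t'_def by (simp add: mult_right_mono)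
  have t1: "1 \<le> t'" unfolding t'_def by simp
  have c0: "0 \<le> c" proof -
    have "(1::real) \<le> 2^(j+1)" by (rule one_le_power) simp
    then show ?thesis unfolding c_def using M by simp
  qed
  have m[measurable]: "fseq f \<sigma> j \<in> borel_measurable borel" using Suc by simp
  have bj: "\<And>x. \<bar>fseq f \<sigma> j x\<bar> \<le> c * psi (x / t)" using Suc unfolding c_def t_def by simp
  have km[measurable]: "Ksig \<sigma> (fseq f \<sigma> j) \<in> borel_measurable borel" by (rule K_meas) simp
  have kb: "\<bar>Ksig \<sigma> (fseq f \<sigma> j) x\<bar> \<le> c * psi (x / t')" for x
    using K_bound[OF m bj t s, of x] sq_step[of \<sigma> j] unfolding t_def t'_def by (simp add: algebra_simps)
  have meas: "fseq f \<sigma> (Suc j) \<in> borel_measurable borel"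
    by (simp add: Delta_def) measurable
  have "\<bar>fseq f \<sigma> (Suc j) x\<bar> \<le> M * (2^(Suc j+1) - 1) * psi (x / t')" for x
  proof -
    have "\<bar>fseq f \<sigma> (Suc j) x\<bar> \<le> \<bar>f x\<bar> + \<bar>Ksig \<sigma> (fseq f \<sigma> j) x\<bar> + \<bar>fseq f \<sigma> j x\<bar>"
      by (simp add: Delta_def)
    also have "\<dots> \<le> M * psi (x / t') + c * psi (x / t') + c * psi (x / t')"
    proof -
      have "psi x \<le> psi (x / t')" using psi_mono[of 1 t' x] t1 by simp
      then have "\<bar>f x\<bar> \<le> M * psi (x / t')" using b[of x] M by (meson mult_left_mono order_trans)
      moreover have "\<bar>fseq f \<sigma> j x\<bar> \<le> c * psi (x / t')"
        using bj[of x] psi_mono[OF t tt, of x] c0 by (meson mult_left_mono order_trans)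
      ultimately show ?thesis using kb[of x] by linarith
    qed
    also have "\<dots> = M * (2^(Suc j+1) - 1) * psi (x / t')" 
    proof -
      have e2: "(2::real)^(Suc j+1) = 2 * 2^(j+1)" by simp
      show ?thesis unfolding c_def e2 by (simp add: algebra_simps)
    qed
    finally show ?thesis .
  qed
  then show ?case using meas unfolding t'_def by blast
qed


theorem lemma14:
  fixes \<beta> \<gamma> lp \<epsilon> C \<alpha> \<xi> M p :: real and L :: "real poly" and k :: nat
    and f :: "real \<Rightarrow> real"
  assumes "0 < \<beta>" and "2 * real k < \<beta>" and "\<beta> \<le> 2 * real k + 2"
    and "0 < \<gamma>" and "0 < lp" and "0 < \<epsilon>" and "0 < C" and "0 < \<alpha>" and "0 < \<xi>" and "0 < M"
    and "f \<in> Hclass \<beta> \<gamma> lp L \<epsilon> C \<alpha> \<xi> M"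
    and "0 < p" and "p < 1"
  shows "\<forall>x::real.
     (\<forall>i::nat. \<forall>\<sigma>::real. 1 \<le> i \<and> 0 < \<sigma> \<and> \<sigma> < 1 - p powr (1 / real i) \<longrightarrow>
        (Ksig \<sigma> ^^ i) f x \<le> M * (2 / sqrt 3) ^ i * psi (p * x)) \<and>
     (\<forall>\<sigma>::real. 0 < \<sigma> \<and> \<sigma> < (if k = 0 then 1 else 1 - p powr (1 / real k)) \<longrightarrow>
        max (max (fseq f \<sigma> k x) (gseq f \<sigma> k x)) (hseq f \<sigma> k x / 2)
          \<le> 2 * M * (4 / sqrt 3) ^ k * psi (p * x))"
proof -
  have H: "f \<in> borel_measurable lborel" "\<And>x. 0 < f x" "(\<integral>\<^sup>+x. ennreal (f x) \<partial>lborel) = 1"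
     "\<And>x. f x \<le> M * psi x"
    using assms(11) unfolding Hclass_def Let_def by auto
  have fm[measurable]: "f \<in> borel_measurable borel" using H(1) by simp
  have fb: "\<bar>f x\<bar> \<le> M * psi x" for x using H(2)[of x] H(4)[of x] by simp
  have M0: "0 \<le> M" using assms by simp
  have p0: "0 \<le> p" using assms by simp
  have fint: "integrable lborel f \<and> integral\<^sup>L lborel f = 1"
    using H by (subst nn_integral_eq_integrable[symmetric]) (auto intro: less_imp_le)
  have s3: "sqrt 3 \<le> (2::real)" using real_sqrt_le_mono[of 3 "2^2"] by simp
  show ?thesis
  proof (intro allI conjI impI)
    fix x :: real and i :: nat and \<sigma> :: real
    assume a: "1 \<le> i \<and> 0 < \<sigma> \<and> \<sigma> < 1 - p powr (1 / real i)"
    have tpos: "0 < sqrt (1 + real i * \<sigma>^2)" by (simp add: add_pos_nonneg)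
    have "(Ksig \<sigma> ^^ i) f x \<le> M * psi (x / sqrt (1 + real i * \<sigma>^2))"
    proof -
      have "\<bar>(Ksig \<sigma> ^^ i) f x\<bar> \<le> M * psi (x / sqrt (1 + real i * \<sigma>^2))"
        using iterK[of \<sigma> f M i, OF _ fm fb] a by blast
      then show ?thesis by linarith
    qed
    also have "\<dots> \<le> M * psi (p * x)"
    proof -
      have "p * sqrt (1 + real i * \<sigma>^2) \<le> 1" using t_le[of p \<sigma> i] a assms(12,13) by blast
      then have "psi (x / sqrt (1 + real i * \<sigma>^2)) \<le> psi (p * x)" using psi_mono2[OF tpos p0] by blast
      then show ?thesis using M0 by (rule mult_left_mono)
    qed
    also have "\<dots> \<le> M * (2 / sqrt 3) ^ i * psi (p * x)"
    proof -
      have "1 \<le> (2 / sqrt 3::real) ^ i" using s3 by (intro one_le_power) simp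
      moreover have "0 \<le> M * psi (p * x)" using M0 psi_pos[of "p * x"] by simp
      ultimately have "M * psi (p * x) * 1 \<le> M * psi (p * x) * (2 / sqrt 3) ^ i"
        by (rule mult_left_mono)
      then show ?thesis by (simp add: algebra_simps)
    qed
    finally show "(Ksig \<sigma> ^^ i) f x \<le> M * (2 / sqrt 3) ^ i * psi (p * x)" .
  next
    fix x :: real and \<sigma> :: real
    assume a: "0 < \<sigma> \<and> \<sigma> < (if k = 0 then 1 else 1 - p powr (1 / real k))"
    define B where "B = 2 * M * (4 / sqrt 3) ^ k * psi (p * x)"
    have tpos: "0 < sqrt (1 + real k * \<sigma>^2)" by (simp add: add_pos_nonneg)
    have tl: "p * sqrt (1 + real k * \<sigma>^2) \<le> 1"
      using t_le[of p \<sigma> k] a assms(12,13) by (cases "k = 0") auto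
    have FB: "fseq f \<sigma> k y \<le> M * (2^(k+1) - 1) * psi (p * y)" for y
    proof -
      have "fseq f \<sigma> k y \<le> M * (2^(k+1) - 1) * psi (y / sqrt (1 + real k * \<sigma>^2))"
      proof -
        have "\<bar>fseq f \<sigma> k y\<bar> \<le> M * (2^(k+1) - 1) * psi (y / sqrt (1 + real k * \<sigma>^2))"
          using iterF[of \<sigma> f M k, OF _ fm fb M0] a by blast
        then show ?thesis by linarith
      qed
      also have "\<dots> \<le> M * (2^(k+1) - 1) * psi (p * y)"
      proof -
        have "(1::real) \<le> 2^(k+1)" by (rule one_le_power) simp
        then show ?thesis using psi_mono2[OF tpos p0 tl, of y] M0 by (intro mult_left_mono) auto
      qed
      finally show ?thesis .
    qed
    have c1: "M * (2^(k+1) - 1) \<le> 2 * M * (4 / sqrt 3) ^ k"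
    proof -
      have "(2::real) ^ k \<le> (4 / sqrt 3) ^ k"
        using s3 by (intro power_mono) (auto simp: field_simps)
      then have "2 * 2 ^ k - 1 \<le> 2 * (4 / sqrt 3::real) ^ k" by linarith
      then have "M * (2 * 2 ^ k - 1) \<le> M * (2 * (4 / sqrt 3) ^ k)" using M0 by (rule mult_left_mono)
      then show ?thesis by (simp add: algebra_simps)
    qed
    have fk: "fseq f \<sigma> k x \<le> B"
    proof -
      have "M * (2^(k+1) - 1) * psi (p * x) \<le> 2 * M * (4 / sqrt 3) ^ k * psi (p * x)"
        using c1 psi_pos[of "p * x"] by (simp add: mult_right_mono)
      then show ?thesis using FB[of x] unfolding B_def by linarith
    qed
    have ff: "f x / 2 \<le> B"
    proof -
      have "psi x \<le> psi (p * x)" using psi_mono2[of 1 p x] assms(12,13) by simp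
      then have f1: "f x \<le> M * psi (p * x)" using H(4)[of x] M0
        by (meson mult_left_mono order_trans)
      have "1 \<le> (4 / sqrt 3::real) ^ k" using s3 by (intro one_le_power) (auto simp: field_simps)
      then have "M * 1 \<le> M * (4 / sqrt 3) ^ k" using M0 by (rule mult_left_mono)
      moreover have "0 \<le> M * (4 / sqrt 3) ^ k" using M0 by simp
      ultimately have "M \<le> 2 * M * (4 / sqrt 3) ^ k" by linarith
      then have "M * psi (p * x) \<le> B" unfolding B_def using psi_pos[of "p * x"]
        by (simp add: mult_right_mono)
      then show ?thesis using f1 H(2)[of x] by linarith
    qed
    have gB: "gseq f \<sigma> k x \<le> B" using fk ff unfolding gseq_def by auto
    have gf: "f y / 2 \<le> gseq f \<sigma> k y" for y unfolding gseq_def Jset_def by auto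
    have hB: "hseq f \<sigma> k x / 2 \<le> B"
    proof (cases "integrable lborel (gseq f \<sigma> k)")
      case True
      have "integral\<^sup>L lborel (\<lambda>y. f y / 2) \<le> integral\<^sup>L lborel (gseq f \<sigma> k)"
        by (rule integral_mono[OF _ True]) (use fint gf in auto)
      then have I: "1 / 2 \<le> integral\<^sup>L lborel (gseq f \<sigma> k)" using fint by simp
      have g0: "0 \<le> gseq f \<sigma> k x" using gf[of x] H(2)[of x] by linarith
      have "hseq f \<sigma> k x / 2 = gseq f \<sigma> k x / (2 * integral\<^sup>L lborel (gseq f \<sigma> k))"
        unfolding hseq_def by simp
      also have "\<dots> \<le> gseq f \<sigma> k x" using I g0 by (simp add: divide_le_eq mult_le_cancel_left1)
      finally show ?thesis using gB by simp
    next
      case False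
      then have "hseq f \<sigma> k x = 0" unfolding hseq_def by (simp add: not_integrable_integral_eq)
      then show ?thesis using ff H(2)[of x] by simp
    qed
    show "max (max (fseq f \<sigma> k x) (gseq f \<sigma> k x)) (hseq f \<sigma> k x / 2) \<le> 2 * M * (4 / sqrt 3) ^ k * psi (p * x)"
      using fk gB hB unfolding B_def by simp
  qed
qed

end
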